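(* Let $q$ be odd, $V$ an $n$-dimensional space over $\mathbb{F}_q$, $n\ge4$, with a non-degenerate alternating form ($G=\mathrm{Sp}(V)$, $q_0=q$) or a non-degenerate hermitian form ($G=\mathrm{SU}(V)$, $q=q_0^2$). Let $\mathcal T$ be the set of transvections of $G$ and $X\subseteq\mathcal T$ a generating set of $G$ such that ${}_VX$ spans $V$, $X_{V^*}$ spans $V^*$, $\Gamma(X)$ is strongly connected, the weights of all cycles of $\Gamma(X)$ generate $\mathbb{F}_q$, the directed diameter of $\Gamma(X'')$ is at most $2$ and its two-way diameter is at most $6$ for every $X\subseteq X''\subseteq\mathcal T$. If $L_3(X)=\mathbb{F}_q$ and $|\mathbb{F}_q:L_2(X)|\le2$, then $L_2(X^{(3)})=\mathbb{F}_q$ in the symplectic case and $L_2(X)=\mathbb{F}_{q_0}$ in the unitary case.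
   Context: Transvections $s=1+u_s\otimes\phi_s$ ($x\mapsto x+\phi_s(x)u_s$). $\Gamma(Y)$: directed graph on $Y$ with edge $[s,t]$ iff $\phi_t(u_s)\ne0$ (two-way if both directions are edges). Weight of $(r_1,\dots,r_k)$: $\prod_{i=1}^k\phi_{r_{i+1}}(u_{r_i})$ (indices mod $k$); a cycle is a tuple with nonzero weight. $L_k(Y)$: subfield generated by the weights of the cycles of $\Gamma(Y)$ of length at most $k$. $Y^{(k)}$: the set of transvections which can be written as a product of at most $k$ elements of $Y\cup Y^{-1}$. ${}_VX$, $X_{V^*}$: the sets of $u_s$, resp. $\phi_s$, $s\in X$. *)

theory Defs
  imports "HOL-Analysis.Analysis"
begin

text \<open>V = 'a^'n, the field 'a is finite. Linear functionals on V are represented by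
coefficient vectors c, acting as x maps to (sum j. c$j * x$j).\<close>

definition fapp :: "'a::field^'n \<Rightarrow> 'a^'n \<Rightarrow> 'a" where
  "fapp c x = (\<Sum>j\<in>UNIV. c$j * x$j)"

text \<open>The matrix of 1 + u (x) phi, i.e. x maps to x + phi(x) u.\<close>
definition transv_mat :: "'a::field^'n \<Rightarrow> 'a^'n \<Rightarrow> 'a^'n^'n" where
  "transv_mat u c = mat 1 + (\<chi> i j. u$i * c$j)"

definition transv_data :: "'a::field^'n^'n \<Rightarrow> 'a^'n \<Rightarrow> 'a^'n \<Rightarrow> bool" where
  "transv_data A u c \<longleftrightarrow> u \<noteq> 0 \<and> c \<noteq> 0 \<and> fapp c u = 0 \<and> A = transv_mat u c"

definition is_transvection :: "'a::field^'n^'n \<Rightarrow> bool" where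
  "is_transvection A \<longleftrightarrow> (\<exists>u c. transv_data A u c)"

text \<open>Chosen representatives u_s and phi_s (determined up to (a u, a^-1 phi)).\<close>
definition tv_u :: "'a::field^'n^'n \<Rightarrow> 'a^'n" where
  "tv_u A = fst (SOME p. transv_data A (fst p) (snd p))"

definition tv_phi :: "'a::field^'n^'n \<Rightarrow> 'a^'n" where
  "tv_phi A = snd (SOME p. transv_data A (fst p) (snd p))"

text \<open>Edge [s,t] of Gamma(Y): phi_t(u_s) \<noteq> 0.\<close>
definition gedge :: "'a::field^'n^'n \<Rightarrow> 'a^'n^'n \<Rightarrow> bool" where
  "gedge s t \<longleftrightarrow> fapp (tv_phi t) (tv_u s) \<noteq> 0"

definition dir_rel :: "('a::field^'n^'n) set \<Rightarrow> (('a^'n^'n) \<times> ('a^'n^'n)) set" where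
  "dir_rel Y = {(s,t). s \<in> Y \<and> t \<in> Y \<and> gedge s t}"

definition twoway_rel :: "('a::field^'n^'n) set \<Rightarrow> (('a^'n^'n) \<times> ('a^'n^'n)) set" where
  "twoway_rel Y = {(s,t). s \<in> Y \<and> t \<in> Y \<and> gedge s t \<and> gedge t s}"

definition strongly_connected :: "('a::field^'n^'n) set \<Rightarrow> bool" where
  "strongly_connected Y \<longleftrightarrow> (\<forall>s\<in>Y. \<forall>t\<in>Y. (s,t) \<in> (dir_rel Y)\<^sup>*)"

text \<open>Diameter of a graph (given by its edge relation R) on vertex set Y is at most k.\<close>
definition diam_le :: "'b set \<Rightarrow> ('b \<times> 'b) set \<Rightarrow> nat \<Rightarrow> bool" where
  "diam_le Y R k \<longleftrightarrow> (\<forall>s\<in>Y. \<forall>t\<in>Y. \<exists>m\<le>k. (s,t) \<in> R ^^ m)"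

text \<open>Weight of a tuple (r_1,...,r_k): prod_i phi_{r_(i+1)}(u_{r_i}), indices mod k.\<close>
definition tweight :: "('a::field^'n^'n) list \<Rightarrow> 'a" where
  "tweight rs = (\<Prod>i<length rs. fapp (tv_phi (rs ! ((i+1) mod length rs))) (tv_u (rs ! i)))"

definition cycle_weights :: "('a::field^'n^'n) set \<Rightarrow> nat \<Rightarrow> 'a set" where
  "cycle_weights Y k = {tweight rs | rs. rs \<noteq> [] \<and> length rs \<le> k \<and> set rs \<subseteq> Y \<and> tweight rs \<noteq> 0}"

definition all_cycle_weights :: "('a::field^'n^'n) set \<Rightarrow> 'a set" where
  "all_cycle_weights Y = {tweight rs | rs. rs \<noteq> [] \<and> set rs \<subseteq> Y \<and> tweight rs \<noteq> 0}"

definition is_subfield :: "'a::field set \<Rightarrow> bool" where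
  "is_subfield K \<longleftrightarrow> 0 \<in> K \<and> 1 \<in> K \<and>
     (\<forall>a\<in>K. \<forall>b\<in>K. a + b \<in> K \<and> a * b \<in> K) \<and> (\<forall>a\<in>K. - a \<in> K \<and> inverse a \<in> K)"

definition gen_subfield :: "'a::field set \<Rightarrow> 'a set" where
  "gen_subfield S = \<Inter>{K. is_subfield K \<and> S \<subseteq> K}"

text \<open>L_k(Y)\<close>
definition Lk :: "nat \<Rightarrow> ('a::field^'n^'n) set \<Rightarrow> 'a set" where
  "Lk k Y = gen_subfield (cycle_weights Y k)"

text \<open>Degree |F : K| of the finite field F = UNIV over a subfield K.\<close>
definition field_index :: "'a::{field,finite} set \<Rightarrow> nat" where
  "field_index K = (THE d. CARD('a) = card K ^ d)"

text \<open>Subgroup generated by a set of invertible matrices.\<close>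
inductive_set gen_group :: "('a::field^'n^'n) set \<Rightarrow> ('a^'n^'n) set" for S where
  one: "mat 1 \<in> gen_group S"
| gen: "A \<in> S \<Longrightarrow> A \<in> gen_group S"
| mult: "A \<in> gen_group S \<Longrightarrow> B \<in> gen_group S \<Longrightarrow> A ** B \<in> gen_group S"
| inv: "A \<in> gen_group S \<Longrightarrow> matrix_inv A \<in> gen_group S"

text \<open>Y^(k): transvections that are products of at most k elements of Y \<union> Y^-1.\<close>
definition Ypow :: "('a::field^'n^'n) set \<Rightarrow> nat \<Rightarrow> ('a^'n^'n) set" where
  "Ypow Y k = {A. is_transvection A \<and>
     (\<exists>ws. length ws \<le> k \<and> set ws \<subseteq> Y \<union> matrix_inv ` Y \<and> A = foldr (**) ws (mat 1))}"

text \<open>Forms on V.\<close>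
definition alternating_form :: "('a::field^'n \<Rightarrow> 'a^'n \<Rightarrow> 'a) \<Rightarrow> bool" where
  "alternating_form B \<longleftrightarrow>
     (\<forall>x y z. B (x + y) z = B x z + B y z) \<and> (\<forall>a x z. B (a *s x) z = a * B x z) \<and>
     (\<forall>x y z. B z (x + y) = B z x + B z y) \<and> (\<forall>a x z. B z (a *s x) = a * B z x) \<and>
     (\<forall>x. B x x = 0) \<and> (\<forall>x. (\<forall>y. B x y = 0) \<longrightarrow> x = 0)"

definition field_involution :: "('a::field \<Rightarrow> 'a) \<Rightarrow> bool" where
  "field_involution \<sigma> \<longleftrightarrow> (\<forall>a b. \<sigma> (a + b) = \<sigma> a + \<sigma> b \<and> \<sigma> (a * b) = \<sigma> a * \<sigma> b) \<and>
     (\<forall>a. \<sigma> (\<sigma> a) = a) \<and> (\<exists>a. \<sigma> a \<noteq> a)"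

definition hermitian_form :: "('a::field \<Rightarrow> 'a) \<Rightarrow> ('a^'n \<Rightarrow> 'a^'n \<Rightarrow> 'a) \<Rightarrow> bool" where
  "hermitian_form \<sigma> B \<longleftrightarrow> field_involution \<sigma> \<and>
     (\<forall>x y z. B (x + y) z = B x z + B y z) \<and> (\<forall>a x z. B (a *s x) z = a * B x z) \<and>
     (\<forall>x y. B y x = \<sigma> (B x y)) \<and> (\<forall>x. (\<forall>y. B x y = 0) \<longrightarrow> x = 0)"

definition isometries :: "('a::field^'n \<Rightarrow> 'a^'n \<Rightarrow> 'a) \<Rightarrow> ('a^'n^'n) set" where
  "isometries B = {A. \<forall>x y. B (A *v x) (A *v y) = B x y}"

definition Sp :: "('a::field^'n \<Rightarrow> 'a^'n \<Rightarrow> 'a) \<Rightarrow> ('a^'n^'n) set" where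
  "Sp B = isometries B"

definition SU :: "('a::field^'n \<Rightarrow> 'a^'n \<Rightarrow> 'a) \<Rightarrow> ('a^'n^'n) set" where
  "SU B = {A \<in> isometries B. det A = 1}"

definition transvections_of :: "('a::field^'n^'n) set \<Rightarrow> ('a^'n^'n) set" where
  "transvections_of G = {A \<in> G. is_transvection A}"

end

theory Submission
  imports Defs
begin

lemma char_not2:
  assumes "odd CARD('a::{field,finite})"
  shows "(2::'a) \<noteq> 0"
proof
  assume h: "(2::'a) = 0"
  have "(\<Sum>x\<in>(UNIV::'a set). x + 1) = (\<Sum>x\<in>(UNIV::'a set). x)"
    by (rule sum.reindex_bij_witness[where i="\<lambda>x. x - 1" and j="\<lambda>x. x + 1"]) auto
  hence "(\<Sum>x\<in>(UNIV::'a set). x) + of_nat CARD('a) = (\<Sum>x\<in>(UNIV::'a set). x)"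
    by (simp add: sum.distrib)
  hence c0: "(of_nat CARD('a)::'a) = 0" by simp
  obtain k where "CARD('a) = 2*k+1" using assms oddE by blast
  hence "(of_nat CARD('a)::'a) = 2 * of_nat k + 1" by simp
  also have "\<dots> = 1" using h by simp
  finally show False using c0 by simp
qed

lemma fapp_add[simp]: "fapp c (x + y) = fapp c x + fapp c y"
  by (simp add: fapp_def algebra_simps sum.distrib)
lemma fapp_scale[simp]: "fapp c (k *s x) = k * fapp c x"
  by (simp add: fapp_def algebra_simps sum_distrib_left)
lemma fapp_diff[simp]: "fapp c (x - y) = fapp c x - fapp c y"
  by (simp add: fapp_def algebra_simps sum_subtractf)
lemma fapp_neg[simp]: "fapp c (- y) = - fapp c y"
  by (simp add: fapp_def sum_negf)
lemma fapp_zero[simp]: "fapp c 0 = 0" "fapp 0 x = 0"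
  by (simp_all add: fapp_def)
lemma fapp_cadd[simp]: "fapp (c + d) x = fapp c x + fapp d x"
  by (simp add: fapp_def algebra_simps sum.distrib)
lemma fapp_cscale[simp]: "fapp (k *s c) x = k * fapp c x"
  by (simp add: fapp_def algebra_simps sum_distrib_left)
lemma fapp_cdiff[simp]: "fapp (c - d) x = fapp c x - fapp d x"
  by (simp add: fapp_def algebra_simps sum_subtractf)
lemma fapp_cneg[simp]: "fapp (- c) x = - fapp c x"
  by (simp add: fapp_def sum_negf)

lemma fapp_eq0: "(\<And>y. fapp c y = 0) \<Longrightarrow> c = 0"
proof -
  assume h: "\<And>y. fapp c y = 0"
  have "c $ j = 0" for j
  proof -
    have "fapp c (axis j 1) = (\<Sum>ja\<in>UNIV. if ja = j then c $ ja else 0)"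
      unfolding fapp_def axis_def by (rule sum.cong) auto
    also have "\<dots> = c $ j" by simp
    finally have "fapp c (axis j 1) = c $ j" .
    thus ?thesis using h by simp
  qed
  thus "c = 0" by (simp add: vec_eq_iff)
qed

lemma tm_apply: "transv_mat u c *v x = x + fapp c x *s u"
proof -
  have "(\<chi> i j. u$i * c$j) *v x = fapp c x *s u"
    unfolding fapp_def by (simp add: vec_eq_iff matrix_vector_mult_def sum_distrib_left algebra_simps)
  thus ?thesis unfolding transv_mat_def by (simp add: matrix_vector_mult_add_rdistrib)
qed

lemma tv_data: "is_transvection A \<Longrightarrow> transv_data A (tv_u A) (tv_phi A)"
  unfolding is_transvection_def tv_u_def tv_phi_def
  by (rule someI_ex[where P="\<lambda>p. transv_data A (fst p) (snd p)", simplified]) auto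

lemma tm_weight_eq:
  assumes "transv_mat u c = transv_mat u' c'"
  shows "fapp d u * fapp c y = fapp d u' * fapp c' y"
proof -
  have "transv_mat u c *v y = transv_mat u' c' *v y" using assms by simp
  hence "fapp c y *s u = fapp c' y *s u'" by (simp add: tm_apply)
  hence "fapp d (fapp c y *s u) = fapp d (fapp c' y *s u')" by simp
  thus ?thesis by (simp add: mult.commute)
qed

lemma matrix_inv_eqI:
  fixes A :: "'a::field^'n^'n"
  assumes "A ** A' = mat 1" "A' ** A = mat 1"
  shows "matrix_inv A = A'"
proof -
  have ex: "\<exists>A''. A ** A'' = mat 1 \<and> A'' ** A = mat 1" using assms by blast
  define M where "M = matrix_inv A"
  have M: "A ** M = mat 1 \<and> M ** A = mat 1"
    unfolding M_def matrix_inv_def by (rule someI_ex[OF ex])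
  have "M = M ** (A ** A')" using assms by simp
  also have "\<dots> = (M ** A) ** A'" by (simp add: matrix_mul_assoc)
  also have "\<dots> = A'" using M by simp
  finally show ?thesis unfolding M_def .
qed

lemma tm_inv:
  assumes "fapp \<alpha> a = 0"
  shows "transv_mat a \<alpha> ** transv_mat a (-\<alpha>) = mat 1"
    "transv_mat a (-\<alpha>) ** transv_mat a \<alpha> = mat 1"
proof -
  have 1: "transv_mat a \<alpha> *v (transv_mat a (-\<alpha>) *v x) = x" for x
  proof -
    have "transv_mat a \<alpha> *v (transv_mat a (-\<alpha>) *v x) = (x - fapp \<alpha> x *s a) + fapp \<alpha> (x - fapp \<alpha> x *s a) *s a"
      by (simp add: tm_apply vector_smult_lneg)
    also have "fapp \<alpha> (x - fapp \<alpha> x *s a) = fapp \<alpha> x" using assms by simp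
    finally show ?thesis by simp
  qed
  have 2: "transv_mat a (-\<alpha>) *v (transv_mat a \<alpha> *v x) = x" for x
  proof -
    have "transv_mat a (-\<alpha>) *v (transv_mat a \<alpha> *v x) = (x + fapp \<alpha> x *s a) - fapp \<alpha> (x + fapp \<alpha> x *s a) *s a"
      by (simp add: tm_apply vector_smult_lneg)
    also have "fapp \<alpha> (x + fapp \<alpha> x *s a) = fapp \<alpha> x" using assms by simp
    finally show ?thesis by simp
  qed
  show "transv_mat a \<alpha> ** transv_mat a (-\<alpha>) = mat 1"
    unfolding matrix_eq using 1 by (simp add: matrix_vector_mul_assoc[symmetric])
  show "transv_mat a (-\<alpha>) ** transv_mat a \<alpha> = mat 1"
    unfolding matrix_eq using 2 by (simp add: matrix_vector_mul_assoc[symmetric])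
qed

lemma tm_conj:
  assumes "fapp \<alpha> a = 0"
  shows "transv_mat a \<alpha> ** (transv_mat b \<beta> ** (transv_mat a (-\<alpha>) ** mat 1))
     = transv_mat (b + fapp \<alpha> b *s a) (\<beta> - fapp \<beta> a *s \<alpha>)"
  unfolding matrix_eq
proof
  fix x
  define y where "y = x - fapp \<alpha> x *s a"
  define z where "z = y + fapp \<beta> y *s b"
  have y: "transv_mat a (-\<alpha>) *v x = y" unfolding y_def by (simp add: tm_apply vector_smult_lneg)
  have z: "transv_mat b \<beta> *v y = z" unfolding z_def by (simp add: tm_apply)
  have fy: "fapp \<beta> y = fapp \<beta> x - fapp \<alpha> x * fapp \<beta> a" unfolding y_def by simp
  have ay: "fapp \<alpha> y = fapp \<alpha> x" unfolding y_def using assms by simp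
  have "transv_mat a \<alpha> ** (transv_mat b \<beta> ** (transv_mat a (-\<alpha>) ** mat 1)) *v x
      = transv_mat a \<alpha> *v (transv_mat b \<beta> *v (transv_mat a (-\<alpha>) *v x))"
    by (simp add: matrix_vector_mul_assoc)
  also have "\<dots> = transv_mat a \<alpha> *v z" by (simp only: y z)
  also have "\<dots> = z + fapp \<alpha> z *s a" by (rule tm_apply)
  also have "\<dots> = x + (fapp \<beta> x - fapp \<beta> a * fapp \<alpha> x) *s (b + fapp \<alpha> b *s a)"
    unfolding z_def fy apply (simp add: ay)
    unfolding y_def by (simp add: vec_eq_iff algebra_simps)
  also have "\<dots> = transv_mat (b + fapp \<alpha> b *s a) (\<beta> - fapp \<beta> a *s \<alpha>) *v x"
    by (simp add: tm_apply)
  finally show "transv_mat a \<alpha> ** (transv_mat b \<beta> ** (transv_mat a (-\<alpha>) ** mat 1)) *v x =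
        transv_mat (b + fapp \<alpha> b *s a) (\<beta> - fapp \<beta> a *s \<alpha>) *v x" .
qed

lemma alt_facts:
  assumes "alternating_form B"
  shows "B (x + y) z = B x z + B y z" "B (a *s x) z = a * B x z"
    "B z (x + y) = B z x + B z y" "B z (a *s x) = a * B z x" "B x x = 0"
  using assms unfolding alternating_form_def by auto

lemma alt_skew:
  assumes "alternating_form B"
  shows "B x y = - B y x"
proof -
  have "B (x + y) (x + y) = 0" using alt_facts(5)[OF assms] .
  hence "B x x + B y x + (B x y + B y y) = 0" by (simp only: alt_facts(1,3)[OF assms])
  hence "B x y + B y x = 0" using alt_facts(5)[OF assms] by (simp add: add.commute)
  thus ?thesis by (simp add: eq_neg_iff_add_eq_0)
qed

lemma sp_form:
  assumes alt: "alternating_form B" and iso: "A \<in> isometries B" and td: "transv_data A u c"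
  shows "\<exists>\<kappa>. \<forall>x. fapp c x = \<kappa> * B u x"
proof -
  note F = alt_facts[OF alt]
  have A: "A = transv_mat u c" "u \<noteq> 0" using td unfolding transv_data_def by auto
  have E: "fapp c y * B x u + fapp c x * B u y = 0" for x y
  proof -
    have "B (A *v x) (A *v y) = B x y" using iso unfolding isometries_def by blast
    thus ?thesis using F by (simp add: A tm_apply algebra_simps)
  qed
  obtain y0 where y0: "B u y0 \<noteq> 0" using alt A(2) unfolding alternating_form_def by blast
  have "fapp c x = (fapp c y0 / B u y0) * B u x" for x
  proof -
    have "fapp c y0 * B x u + fapp c x * B u y0 = 0" by (rule E)
    hence "fapp c x * B u y0 = fapp c y0 * B u x" using alt_skew[OF alt, of x u] by (simp add: algebra_simps)
    thus ?thesis using y0 by (simp add: field_simps)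
  qed
  thus ?thesis by blast
qed

lemma invol_facts:
  assumes "field_involution \<sigma>"
  shows "\<sigma> (a + b) = \<sigma> a + \<sigma> b" "\<sigma> (a * b) = \<sigma> a * \<sigma> b" "\<sigma> (\<sigma> a) = a"
    "\<sigma> 0 = 0" "\<sigma> 1 = 1" "\<sigma> (- a) = - \<sigma> a" "\<sigma> (inverse a) = inverse (\<sigma> a)"
    "(\<sigma> a = 0) = (a = 0)"
proof -
  note F = assms[unfolded field_involution_def]
  show 1: "\<sigma> (a + b) = \<sigma> a + \<sigma> b" "\<sigma> (a * b) = \<sigma> a * \<sigma> b" "\<sigma> (\<sigma> a) = a" for a b
    using F by blast+
  have "\<sigma> 0 + \<sigma> 0 = \<sigma> 0 + 0" using 1(1)[of 0 0] by simp
  thus 0: "\<sigma> 0 = 0" by (rule add_left_imp_eq)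
  show z: "(\<sigma> a = 0) = (a = 0)" for a
  proof
    assume "\<sigma> a = 0"
    hence "\<sigma> (\<sigma> a) = \<sigma> 0" by simp
    thus "a = 0" using 1(3)[of a] 0 by simp
  next
    assume "a = 0" thus "\<sigma> a = 0" using 0 by simp
  qed
  have "\<sigma> 1 * 1 = \<sigma> 1 * \<sigma> 1" using 1(2)[of 1 1] by simp
  moreover have "\<sigma> 1 \<noteq> 0" using z[of 1] by simp
  ultimately show o: "\<sigma> 1 = 1" using mult_left_cancel[of "\<sigma> 1" 1 "\<sigma> 1"] by simp
  have "\<sigma> a + \<sigma> (- a) = 0" using 1(1)[of a "-a"] 0 by simp
  thus "\<sigma> (- a) = - \<sigma> a" by (metis add.commute eq_neg_iff_add_eq_0)
  show "\<sigma> (inverse a) = inverse (\<sigma> a)"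
  proof (cases "a = 0")
    case True thus ?thesis using 0 by simp
  next
    case False
    have "\<sigma> a * \<sigma> (inverse a) = 1" using 1(2)[of a "inverse a"] o False by simp
    hence "inverse (\<sigma> a) = \<sigma> (inverse a)" by (rule inverse_unique)
    thus ?thesis by simp
  qed
qed

lemma herm_facts:
  assumes "hermitian_form \<sigma> B"
  shows "B (x + y) z = B x z + B y z" "B (a *s x) z = a * B x z"
    "B z (x + y) = B z x + B z y" "B z (a *s x) = \<sigma> a * B z x" "B y x = \<sigma> (B x y)"
    "field_involution \<sigma>"
proof -
  note F = assms[unfolded hermitian_form_def]
  show i: "field_involution \<sigma>" using F by blast
  show 1: "B (x + y) z = B x z + B y z" "B (a *s x) z = a * B x z" "B y x = \<sigma> (B x y)"
    for x y z a using F by blast+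
  have "B z (x + y) = \<sigma> (B (x + y) z)" by (rule 1(3))
  also have "\<dots> = \<sigma> (B x z) + \<sigma> (B y z)" by (simp only: 1(1) invol_facts(1)[OF i])
  also have "\<dots> = B z x + B z y" by (simp only: 1(3)[symmetric])
  finally show "B z (x + y) = B z x + B z y" .
  have "B z (a *s x) = \<sigma> (B (a *s x) z)" by (rule 1(3))
  also have "\<dots> = \<sigma> a * \<sigma> (B x z)" by (simp only: 1(2) invol_facts(2)[OF i])
  also have "\<dots> = \<sigma> a * B z x" by (simp only: 1(3)[symmetric])
  finally show "B z (a *s x) = \<sigma> a * B z x" .
qed

lemma su_form:
  assumes h: "hermitian_form \<sigma> B" and iso: "A \<in> isometries B" and td: "transv_data A u c"
  shows "\<exists>\<kappa>. \<sigma> \<kappa> = - \<kappa> \<and> (\<forall>x. fapp c x = \<kappa> * B x u)"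
proof -
  note F = herm_facts[OF h]
  note S = invol_facts[OF F(6)]
  have A: "A = transv_mat u c" "u \<noteq> 0" "c \<noteq> 0" "fapp c u = 0"
    using td unfolding transv_data_def by auto
  have E0: "\<sigma> (fapp c y) * B x u + fapp c x * B u y + fapp c x * \<sigma> (fapp c y) * B u u = 0" for x y
  proof -
    have "B (A *v x) (A *v y) = B x y" using iso unfolding isometries_def by blast
    thus ?thesis using F(1-4) by (simp add: A tm_apply algebra_simps)
  qed
  obtain y1 where y1: "fapp c y1 \<noteq> 0" using A(3) fapp_eq0 by blast
  have "\<sigma> (fapp c y1) * B u u = 0" using E0[where x=u and y=y1] A(4) by simp
  hence Buu: "B u u = 0" using y1 S(8) by simp
  have E: "\<sigma> (fapp c y) * B x u + fapp c x * B u y = 0" for x y using E0[where x=x and y=y] Buu by simp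
  obtain y0 where y0: "B u y0 \<noteq> 0" using h A(2) unfolding hermitian_form_def by blast
  define \<kappa> where "\<kappa> = - \<sigma> (fapp c y0) / B u y0"
  have K: "fapp c x = \<kappa> * B x u" for x
  proof -
    have "\<sigma> (fapp c y0) * B x u + fapp c x * B u y0 = 0" by (rule E)
    thus ?thesis using y0 unfolding \<kappa>_def by (simp add: field_simps)
       (metis add.commute add_eq_0_iff mult.commute)
  qed
  have y0': "B y0 u \<noteq> 0" using y0 F(5)[where y=y0 and x=u] S(8) by simp
  have "\<sigma> (fapp c y0) * B y0 u + fapp c y0 * B u y0 = 0" by (rule E)
  hence "\<sigma> (\<kappa> * B y0 u) * B y0 u + \<kappa> * B y0 u * B u y0 = 0" using K by simp
  hence "(\<sigma> \<kappa> + \<kappa>) * (B y0 u * B u y0) = 0" using F(5)[where y=u and x=y0] S(2) by (simp add: algebra_simps)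
  hence "\<sigma> \<kappa> = - \<kappa>" using y0 y0' by (simp add: eq_neg_iff_add_eq_0)
  thus ?thesis using K by blast
qed

lemma gs_sub: "is_subfield (gen_subfield S)"
  unfolding gen_subfield_def is_subfield_def by auto

lemma gs_incl: "S \<subseteq> gen_subfield S"
  unfolding gen_subfield_def by auto

lemma gs_min: "is_subfield K \<Longrightarrow> S \<subseteq> K \<Longrightarrow> gen_subfield S \<subseteq> K"
  unfolding gen_subfield_def by auto

lemma gs_mono: "S \<subseteq> T \<Longrightarrow> gen_subfield S \<subseteq> gen_subfield T"
  by (meson gs_incl gs_min gs_sub order_trans)

lemma sf_facts:
  assumes "is_subfield K"
  shows "0 \<in> K" "1 \<in> K" "a \<in> K \<Longrightarrow> b \<in> K \<Longrightarrow> a + b \<in> K"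
    "a \<in> K \<Longrightarrow> b \<in> K \<Longrightarrow> a * b \<in> K" "a \<in> K \<Longrightarrow> - a \<in> K"
    "a \<in> K \<Longrightarrow> inverse a \<in> K" "a \<in> K \<Longrightarrow> b \<in> K \<Longrightarrow> a - b \<in> K"
proof -
  show 1: "0 \<in> K" "1 \<in> K" "a \<in> K \<Longrightarrow> b \<in> K \<Longrightarrow> a + b \<in> K"
    "a \<in> K \<Longrightarrow> b \<in> K \<Longrightarrow> a * b \<in> K" "a \<in> K \<Longrightarrow> - a \<in> K"
    "a \<in> K \<Longrightarrow> inverse a \<in> K" for a b
    using assms unfolding is_subfield_def by blast+
  show "a \<in> K \<Longrightarrow> b \<in> K \<Longrightarrow> a - b \<in> K"
    using 1(3)[of a "-b"] 1(5)[of b] by (simp only: diff_conv_add_uminus)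
qed

definition ksub :: "'a::field set \<Rightarrow> 'a set \<Rightarrow> bool" where
  "ksub K W \<longleftrightarrow> 0 \<in> W \<and> (\<forall>a\<in>W. \<forall>b\<in>W. a + b \<in> W) \<and> (\<forall>k\<in>K. \<forall>a\<in>W. k * a \<in> W)"

lemma count_sub:
  fixes K :: "'a::{field,finite} set"
  assumes K: "is_subfield K"
    and "ksub K W" "ksub K U" "W \<subseteq> U"
  shows "\<exists>f. card U = card W * card K ^ f"
  using assms(2-4)
proof (induction "card (U - W)" arbitrary: W rule: less_induct)
  case less
  show ?case
  proof (cases "W = U")
    case True thus ?thesis by (intro exI[of _ 0]) simp
  next
    case False
    then obtain x where x: "x \<in> U" "x \<notin> W" using less.prems(3) by blast
    define W' where "W' = (\<lambda>(w,k). w + k * x) ` (W \<times> K)"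
    have Wc: "0 \<in> W" "\<And>a b. a \<in> W \<Longrightarrow> b \<in> W \<Longrightarrow> a + b \<in> W" "\<And>k a. k \<in> K \<Longrightarrow> a \<in> W \<Longrightarrow> k * a \<in> W"
      using less.prems(1) unfolding ksub_def by auto
    have Uc: "0 \<in> U" "\<And>a b. a \<in> U \<Longrightarrow> b \<in> U \<Longrightarrow> a + b \<in> U" "\<And>k a. k \<in> K \<Longrightarrow> a \<in> U \<Longrightarrow> k * a \<in> U"
      using less.prems(2) unfolding ksub_def by auto
    note KF = sf_facts[OF K]
    have Wneg: "a \<in> W \<Longrightarrow> - a \<in> W" for a using Wc(3)[of "-1" a] KF(2,5) by fastforce
    have W'm: "y \<in> W' \<longleftrightarrow> (\<exists>w\<in>W. \<exists>k\<in>K. y = w + k * x)" for y unfolding W'_def by auto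
    have ks: "ksub K W'"
      unfolding ksub_def
    proof (intro conjI ballI)
      show "0 \<in> W'" unfolding W'm using Wc(1) KF(1) by force
    next
      fix a b assume "a \<in> W'" "b \<in> W'"
      then obtain w1 k1 w2 k2 where "w1 \<in> W" "k1 \<in> K" "w2 \<in> W" "k2 \<in> K" "a = w1 + k1 * x" "b = w2 + k2 * x"
        unfolding W'm by blast
      thus "a + b \<in> W'" unfolding W'm
        using Wc(2) KF(3) by (intro bexI[of _ "w1 + w2"] bexI[of _ "k1 + k2"]) (auto simp: algebra_simps)
    next
      fix k a assume k: "k \<in> K" and "a \<in> W'"
      then obtain w1 k1 where "w1 \<in> W" "k1 \<in> K" "a = w1 + k1 * x" unfolding W'm by blast
      thus "k * a \<in> W'" unfolding W'm
        using Wc(3) KF(4) k by (intro bexI[of _ "k * w1"] bexI[of _ "k * k1"]) (auto simp: algebra_simps)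
    qed
    have sub: "W' \<subseteq> U" unfolding W'_def using less.prems(3) Uc x(1) by auto
    have WW': "W \<subseteq> W'"
    proof
      fix w assume "w \<in> W"
      thus "w \<in> W'" unfolding W'm using KF(1) by (intro bexI[of _ w] bexI[of _ 0]) auto
    qed
    have xW': "x \<in> W'" unfolding W'm using KF(2) Wc(1) by force
    have lt: "card (U - W') < card (U - W)"
      by (rule psubset_card_mono) (use WW' xW' x in auto)
    obtain f where f: "card U = card W' * card K ^ f" using less.hyps[OF lt ks less.prems(2) sub] by blast
    have inj: "inj_on (\<lambda>(w,k). w + k * x) (W \<times> K)"
    proof (rule inj_onI, clarsimp)
      fix w k w' k' assume h: "w \<in> W" "k \<in> K" "w' \<in> W" "k' \<in> K" "w + k * x = w' + k' * x"
      show "w = w' \<and> k = k'"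
      proof (cases "k = k'")
        case True thus ?thesis using h by simp
      next
        case False
        have "(k - k') * x = w' - w" using h(5) by (simp add: algebra_simps)
        hence "x = inverse (k - k') * (w' - w)" using False by (simp add: field_simps)
        moreover have "inverse (k - k') * (w' - w) \<in> W"
        proof -
          have "w' + - w \<in> W" using Wc(2) Wneg h by blast
          hence "w' - w \<in> W" by (simp only: diff_conv_add_uminus)
          moreover have "inverse (k - k') \<in> K" using KF(6,7) h by blast
          ultimately show ?thesis using Wc(3) by blast
        qed
        ultimately show ?thesis using x by simp
      qed
    qed
    have "card W' = card W * card K" unfolding W'_def using card_image[OF inj] by (simp add: card_cartesian_product)
    thus ?thesis using f by (intro exI[of _ "Suc f"]) simp
  qed
qed

lemma sf_ksub: "is_subfield L \<Longrightarrow> K \<subseteq> L \<Longrightarrow> ksub K L"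
  unfolding ksub_def is_subfield_def by auto

lemma card_sf_ge2:
  fixes K :: "'a::{field,finite} set"
  assumes "is_subfield K" shows "card K \<ge> 2"
proof -
  have "{0,1} \<subseteq> K" using sf_facts[OF assms] by auto
  hence "card {0::'a,1} \<le> card K" by (intro card_mono) auto
  thus ?thesis by simp
qed

lemma sf_power:
  fixes K L :: "'a::{field,finite} set"
  assumes "is_subfield K" "is_subfield L" "K \<subseteq> L"
  shows "\<exists>f. card L = card K ^ f"
proof -
  have "ksub K {0}" unfolding ksub_def by auto
  moreover have "{0} \<subseteq> L" using sf_facts(1)[OF assms(2)] by auto
  ultimately obtain f where "card L = card {0::'a} * card K ^ f"
    using count_sub[OF assms(1)] sf_ksub[OF assms(2,3)] by blast
  thus ?thesis by auto
qed

lemma univ_sf: "is_subfield (UNIV :: 'a::field set)"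
  unfolding is_subfield_def by auto

lemma field_index_eq:
  fixes K :: "'a::{field,finite} set"
  assumes K: "is_subfield K"
  shows "CARD('a) = card K ^ field_index K"
proof -
  obtain d where d: "CARD('a) = card K ^ d" using sf_power[OF K univ_sf] by auto
  have ge: "card K \<ge> 2" by (rule card_sf_ge2[OF K])
  have "field_index K = d"
    unfolding field_index_def
  proof (rule the_equality)
    show "CARD('a) = card K ^ d" by (rule d)
    fix d' assume "CARD('a) = card K ^ d'"
    with d have "card K ^ d' = card K ^ d" by simp
    thus "d' = d" using ge power_inject_exp[of "card K"] by simp
  qed
  thus ?thesis using d by simp
qed

lemma tw1: "tweight [a] = fapp (tv_phi a) (tv_u a)"
proof -
  have e: "{..<length [a]} = {0}" by auto
  show ?thesis unfolding tweight_def e by simp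
qed
lemma tw2: "tweight [a,b] = fapp (tv_phi b) (tv_u a) * fapp (tv_phi a) (tv_u b)"
proof -
  have e: "{..<length [a,b]} = {0, Suc 0}" by auto
  show ?thesis unfolding tweight_def e by simp
qed
lemma tw3: "tweight [a,b,c] = fapp (tv_phi b) (tv_u a) * fapp (tv_phi c) (tv_u b) * fapp (tv_phi a) (tv_u c)"
proof -
  have e: "{..<length [a,b,c]} = {0, Suc 0, Suc (Suc 0)}" by auto
  show ?thesis unfolding tweight_def e by (simp add: mult.assoc)
qed

lemma tw2_in: "s \<in> Y \<Longrightarrow> t \<in> Y \<Longrightarrow> tweight [s,t] \<in> Lk 2 Y"
proof (cases "tweight [s,t] = 0")
  case True thus ?thesis unfolding Lk_def using sf_facts(1)[OF gs_sub] by simp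
next
  case False
  assume "s \<in> Y" "t \<in> Y"
  hence "tweight [s,t] \<in> cycle_weights Y 2" unfolding cycle_weights_def using False by force
  thus ?thesis unfolding Lk_def using gs_incl by blast
qed

lemma len1: "length xs = Suc 0 \<Longrightarrow> \<exists>a. xs = [a]"
  by (auto simp: length_Suc_conv)
lemma len2: "length xs = Suc (Suc 0) \<Longrightarrow> \<exists>a b. xs = [a,b]"
  by (auto simp: length_Suc_conv)
lemma len3: "length xs = Suc (Suc (Suc 0)) \<Longrightarrow> \<exists>a b c. xs = [a,b,c]"
  by (auto simp: length_Suc_conv)

lemma cw3_cases:
  assumes "w \<in> cycle_weights Y 3"
  shows "(\<exists>s\<in>Y. w = tweight [s] \<and> w \<noteq> 0) \<or> w \<in> cycle_weights Y 2 \<or>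
         (\<exists>x\<in>Y. \<exists>y\<in>Y. \<exists>z\<in>Y. w = tweight [x,y,z] \<and> w \<noteq> 0)"
proof -
  obtain rs where rs: "w = tweight rs" "rs \<noteq> []" "length rs \<le> 3" "set rs \<subseteq> Y" "w \<noteq> 0"
    using assms unfolding cycle_weights_def by blast
  show ?thesis
  proof (cases "length rs \<le> 2")
    case True
    hence "w \<in> cycle_weights Y 2" using rs unfolding cycle_weights_def by blast
    thus ?thesis by blast
  next
    case False
    hence "length rs = Suc (Suc (Suc 0))" using rs(3) by simp
    then obtain x y z where xyz: "rs = [x,y,z]" using len3 by blast
    hence "x \<in> Y" "y \<in> Y" "z \<in> Y" using rs(4) by auto
    thus ?thesis using rs(1,5) xyz by blast
  qed
qed

lemma cw2_cases:
  assumes "w \<in> cycle_weights Y 2"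
  shows "(\<exists>s\<in>Y. w = tweight [s] \<and> w \<noteq> 0) \<or> (\<exists>x\<in>Y. \<exists>y\<in>Y. w = tweight [x,y] \<and> w \<noteq> 0)"
proof -
  obtain rs where rs: "w = tweight rs" "rs \<noteq> []" "length rs \<le> 2" "set rs \<subseteq> Y" "w \<noteq> 0"
    using assms unfolding cycle_weights_def by blast
  show ?thesis
  proof (cases "length rs = 1")
    case True
    then obtain x where xs: "rs = [x]" using len1 by auto
    hence "x \<in> Y" using rs(4) by auto
    thus ?thesis using rs(1,5) xs by blast
  next
    case False
    have "length rs \<noteq> 0" using rs(2) by simp
    hence "length rs = 2" using rs(3) False by linarith
    hence "length rs = Suc (Suc 0)" by simp
    then obtain x y where xs: "rs = [x,y]" using len2 by blast
    hence "x \<in> Y" "y \<in> Y" using rs(4) by auto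
    thus ?thesis using rs(1,5) xs by blast
  qed
qed

lemma card_fixed:
  fixes \<sigma> :: "'a::{field,finite} \<Rightarrow> 'a"
  assumes inv: "field_involution \<sigma>" and two: "(2::'a) \<noteq> 0"
  shows "CARD('a) = card {a. \<sigma> a = a} ^ 2"
proof -
  note S = invol_facts[OF inv]
  define F0 where "F0 = {a. \<sigma> a = a}"
  obtain a0 where a0: "\<sigma> a0 \<noteq> a0" using inv unfolding field_involution_def by blast
  define c0 where "c0 = a0 - \<sigma> a0"
  have sd: "\<sigma> (a - b) = \<sigma> a - \<sigma> b" for a b
  proof -
    have "\<sigma> (a - b) = \<sigma> (a + - b)" by (simp only: diff_conv_add_uminus)
    also have "\<dots> = \<sigma> a + - \<sigma> b" by (simp only: S(1) S(6))
    finally show ?thesis by (simp only: diff_conv_add_uminus)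
  qed
  have c0: "c0 \<noteq> 0" "\<sigma> c0 = - c0"
    using a0 unfolding c0_def sd S(3) by auto
  have s2: "\<sigma> 2 = 2" using S(1)[of 1 1] S(5) by simp
  have bij: "bij_betw (\<lambda>(p,q). p + c0 * q) (F0 \<times> F0) UNIV"
  proof (rule bij_betwI')
    fix pq pq' assume "pq \<in> F0 \<times> F0" "pq' \<in> F0 \<times> F0"
    then obtain p q p' q' where pq: "pq = (p,q)" "pq' = (p',q')" "\<sigma> p = p" "\<sigma> q = q" "\<sigma> p' = p'" "\<sigma> q' = q'"
      unfolding F0_def by auto
    show "((\<lambda>(p,q). p + c0 * q) pq = (\<lambda>(p,q). p + c0 * q) pq') = (pq = pq')"
    proof
      assume h: "(\<lambda>(p,q). p + c0 * q) pq = (\<lambda>(p,q). p + c0 * q) pq'"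
      hence h1: "p + c0 * q = p' + c0 * q'" using pq by simp
      hence "\<sigma> (p + c0 * q) = \<sigma> (p' + c0 * q')" by simp
      moreover have "\<sigma> (p + c0 * q) = p - c0 * q"
        by (simp only: S(1) S(2) pq(3,4) c0(2)) simp
      moreover have "\<sigma> (p' + c0 * q') = p' - c0 * q'"
        by (simp only: S(1) S(2) pq(5,6) c0(2)) simp
      ultimately have h2: "p - c0 * q = p' - c0 * q'" by simp
      have "(p + c0*q) + (p - c0*q) = (p' + c0*q') + (p' - c0*q')" using h1 h2 by (rule arg_cong2)
      moreover have "(p + c0*q) + (p - c0*q) = 2*p" by (simp add: algebra_simps mult_2)
      moreover have "(p' + c0*q') + (p' - c0*q') = 2*p'" by (simp add: algebra_simps mult_2)
      ultimately have "2 * p = 2 * p'" by simp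
      hence "p = p'" using two by simp
      hence "c0 * q = c0 * q'" using h1 by simp
      hence "q = q'" using c0 by simp
      thus "pq = pq'" using pq \<open>p = p'\<close> by simp
    qed simp
  next
    fix pq assume "pq \<in> F0 \<times> F0" thus "(\<lambda>(p,q). p + c0 * q) pq \<in> UNIV" by simp
  next
    fix x :: 'a
    define p where "p = inverse 2 * (x + \<sigma> x)"
    define q where "q = inverse (2 * c0) * (x - \<sigma> x)"
    have "\<sigma> p = inverse 2 * (\<sigma> x + x)" unfolding p_def by (simp only: S(1) S(2) S(3) S(7) s2)
    hence "\<sigma> p = p" unfolding p_def by (simp add: add.commute)
    moreover have "\<sigma> q = q"
    proof -
      have "\<sigma> q = inverse (2 * - c0) * (\<sigma> x - x)" unfolding q_def
        by (simp only: S(2) S(7) sd S(3) s2 c0(2))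
      also have "\<dots> = q" unfolding q_def using c0 two by (simp add: field_simps)
      finally show ?thesis .
    qed
    moreover have "p + c0 * q = x"
    proof -
      have e4: "(4::'a) = 2 * 2" by simp
      have four: "(4::'a) \<noteq> 0" unfolding e4 mult_eq_0_iff using two by blast
      show ?thesis unfolding p_def q_def using c0 two four by (simp add: field_simps)
    qed
    ultimately show "\<exists>pq\<in>F0 \<times> F0. x = (\<lambda>(p,q). p + c0 * q) pq"
      unfolding F0_def by (intro bexI[of _ "(p,q)"]) auto
  qed
  have "CARD('a) = card (F0 \<times> F0)" using bij_betw_same_card[OF bij] by simp
  thus ?thesis unfolding F0_def by (simp add: card_cartesian_product power2_eq_square)
qed

lemma X_facts:
  assumes "X \<subseteq> transvections_of G" "G \<subseteq> isometries B" "s \<in> X"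
  shows "s \<in> isometries B" "is_transvection s" "transv_data s (tv_u s) (tv_phi s)"
    "fapp (tv_phi s) (tv_u s) = 0" "s = transv_mat (tv_u s) (tv_phi s)"
    "tv_u s \<noteq> 0" "tv_phi s \<noteq> 0"
proof -
  show "s \<in> isometries B" "is_transvection s" using assms unfolding transvections_of_def by auto
  thus td: "transv_data s (tv_u s) (tv_phi s)" using tv_data by blast
  thus "fapp (tv_phi s) (tv_u s) = 0" "s = transv_mat (tv_u s) (tv_phi s)"
    "tv_u s \<noteq> 0" "tv_phi s \<noteq> 0" unfolding transv_data_def by auto
qed

lemma herm_part:
  fixes B :: "'a::{field,finite}^'n \<Rightarrow> 'a^'n \<Rightarrow> 'a"
  assumes q_odd: "odd CARD('a)" and h: "hermitian_form \<sigma> B"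
    and XT: "X \<subseteq> transvections_of (SU B)" and L2: "field_index (Lk 2 X) \<le> 2"
  shows "Lk 2 X = {a. \<sigma> a = a}"
proof -
  have GI: "SU B \<subseteq> isometries B" unfolding SU_def by auto
  note XF = X_facts[OF XT GI]
  note F = herm_facts[OF h]
  note S = invol_facts[OF F(6)]
  define F0 where "F0 = {a. \<sigma> a = a}"
  have F0sf: "is_subfield F0" unfolding F0_def is_subfield_def using S by auto
  have kap: "\<exists>\<kappa>. \<sigma> \<kappa> = - \<kappa> \<and> (\<forall>x. fapp (tv_phi s) x = \<kappa> * B x (tv_u s))" if "s \<in> X" for s
    using su_form[OF h XF(1)[OF that] XF(3)[OF that]] .
  have cw: "cycle_weights X 2 \<subseteq> F0"
  proof
    fix w assume "w \<in> cycle_weights X 2"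
    from cw2_cases[OF this] show "w \<in> F0"
    proof (elim disjE bexE conjE)
      fix s assume s: "s \<in> X" "w = tweight [s]" "w \<noteq> 0"
      have "tweight [s] = fapp (tv_phi s) (tv_u s)" by (rule tw1)
      also have "\<dots> = 0" by (rule XF(4)[OF s(1)])
      finally show ?thesis using s by simp
    next
      fix x y assume xy: "x \<in> X" "y \<in> X" and w: "w = tweight [x,y]"
      obtain kx where kx: "\<sigma> kx = - kx" "\<And>v. fapp (tv_phi x) v = kx * B v (tv_u x)" using kap[OF xy(1)] by blast
      obtain ky where ky: "\<sigma> ky = - ky" "\<And>v. fapp (tv_phi y) v = ky * B v (tv_u y)" using kap[OF xy(2)] by blast
      have "w = fapp (tv_phi y) (tv_u x) * fapp (tv_phi x) (tv_u y)" using w by (simp only: tw2)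
      also have "\<dots> = ky * B (tv_u x) (tv_u y) * (kx * B (tv_u y) (tv_u x))" by (simp only: kx(2) ky(2))
      finally have wk: "w = ky * B (tv_u x) (tv_u y) * (kx * B (tv_u y) (tv_u x))" .
      hence "\<sigma> w = (- ky) * B (tv_u y) (tv_u x) * ((- kx) * B (tv_u x) (tv_u y))"
        using S(2) kx(1) ky(1) F(5)[where y="tv_u y" and x="tv_u x", symmetric]
          F(5)[where y="tv_u x" and x="tv_u y", symmetric] by simp
      also have "\<dots> = w" using wk by (simp add: algebra_simps)
      finally show ?thesis unfolding F0_def by simp
    qed
  qed
  define K where "K = Lk 2 X"
  have Ksf: "is_subfield K" unfolding K_def Lk_def by (rule gs_sub)
  have KF0: "K \<subseteq> F0" unfolding K_def Lk_def by (rule gs_min[OF F0sf cw])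
  have two: "(2::'a) \<noteq> 0" by (rule char_not2[OF q_odd])
  have c0: "CARD('a) = card F0 ^ 2" unfolding F0_def by (rule card_fixed[OF F(6) two])
  have c1: "CARD('a) = card K ^ field_index K" by (rule field_index_eq[OF Ksf])
  have ge: "card K \<ge> 2" by (rule card_sf_ge2[OF Ksf])
  have cU: "CARD('a) \<ge> 2" by (rule card_sf_ge2[OF univ_sf, simplified])
  have "field_index K \<le> 2" using L2 unfolding K_def .
  then consider "field_index K = 0" | "field_index K = 1" | "field_index K = 2" by linarith
  thus ?thesis
  proof cases
    case 1 thus ?thesis using c1 cU by simp
  next
    case 2
    hence "card K = card (UNIV :: 'a set)" using c1 by simp
    hence "K = UNIV" by (metis card_subset_eq finite subset_UNIV)
    hence "F0 = UNIV" using KF0 by auto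
    obtain a0 where "\<sigma> a0 \<noteq> a0" using F(6) unfolding field_involution_def by blast
    moreover have "a0 \<in> F0" using \<open>F0 = UNIV\<close> by simp
    ultimately show ?thesis unfolding F0_def by simp
  next
    case 3
    hence "card K ^ 2 = card F0 ^ 2" using c0 c1 by simp
    hence "card K = card F0" using power_eq_iff_eq_base[of 2 "card K" "card F0"] by simp
    hence "K = F0" using KF0 by (metis card_subset_eq finite)
    thus ?thesis unfolding K_def F0_def .
  qed
qed


lemma poly_id:
  fixes P Q R ks kr kt :: "'a::comm_ring_1"
  shows "(kt*P + kr*Q*(kt*R)) * (-(ks*P) - (-(ks*Q))*(-(kr*R)))
    = (kt*P)*(-(ks*P)) + 2*((kr*Q)*(kt*R)*(-(ks*P))) - ((kr*Q)*(-(ks*Q)))*((kt*R)*(-(kr*R)))"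
  by (simp add: algebra_simps mult_2)

lemma sp_part:
  fixes B :: "'a::{field,finite}^'n \<Rightarrow> 'a^'n \<Rightarrow> 'a"
  assumes q_odd: "odd CARD('a)" and alt: "alternating_form B"
    and XT: "X \<subseteq> transvections_of (Sp B)" and L3: "Lk 3 X = UNIV"
    and L2: "field_index (Lk 2 X) \<le> 2"
  shows "Lk 2 (Ypow X 3) = UNIV"
proof -
  have GI: "Sp B \<subseteq> isometries B" unfolding Sp_def by simp
  note XF = X_facts[OF XT GI]
  define K where "K = Lk 2 X"
  define L where "L = Lk 2 (Ypow X 3)"
  have Ksf: "is_subfield K" unfolding K_def Lk_def by (rule gs_sub)
  have Lsf: "is_subfield L" unfolding L_def Lk_def by (rule gs_sub)
  have XY: "X \<subseteq> Ypow X 3"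
  proof
    fix s assume s: "s \<in> X"
    show "s \<in> Ypow X 3" unfolding Ypow_def
      using XF(2)[OF s] s by (intro CollectI conjI exI[of _ "[s]"]) auto
  qed
  have "cycle_weights X 2 \<subseteq> cycle_weights (Ypow X 3) 2"
    unfolding cycle_weights_def using XY by blast
  hence KL: "K \<subseteq> L" unfolding K_def L_def Lk_def by (rule gs_mono)
  show ?thesis
  proof (cases "K = UNIV")
    case True thus ?thesis using KL unfolding L_def by auto
  next
    case False
    have "\<not> cycle_weights X 3 \<subseteq> K"
    proof
      assume "cycle_weights X 3 \<subseteq> K"
      hence "Lk 3 X \<subseteq> K" unfolding Lk_def by (rule gs_min[OF Ksf])
      thus False using L3 False by auto
    qed
    then obtain w where w: "w \<in> cycle_weights X 3" "w \<notin> K" by blast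
    have cw2K: "cycle_weights X 2 \<subseteq> K" unfolding K_def Lk_def by (rule gs_incl)
    obtain s r t where srt: "s \<in> X" "r \<in> X" "t \<in> X" and wdef: "w = tweight [s,r,t]"
      using cw3_cases[OF w(1)]
    proof (elim disjE bexE conjE)
      fix s assume s: "s \<in> X" "w = tweight [s]" "w \<noteq> 0"
      have "tweight [s] = fapp (tv_phi s) (tv_u s)" by (rule tw1)
      also have "\<dots> = 0" by (rule XF(4)[OF s(1)])
      finally show ?thesis using s by simp
    next
      assume "w \<in> cycle_weights X 2" thus ?thesis using cw2K w(2) by blast
    qed blast
    define a where "a = tv_u r"
    define \<alpha> where "\<alpha> = tv_phi r"
    define b where "b = tv_u s"
    define \<beta> where "\<beta> = tv_phi s"
    have rr: "r = transv_mat a \<alpha>" "fapp \<alpha> a = 0" unfolding a_def \<alpha>_def using XF(5,4)[OF srt(2)] by auto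
    have ss: "s = transv_mat b \<beta>" "fapp \<beta> b = 0" "b \<noteq> 0" "\<beta> \<noteq> 0"
      unfolding b_def \<beta>_def using XF(5,4,6,7)[OF srt(1)] by auto
    define rinv where "rinv = transv_mat a (-\<alpha>)"
    have mi: "matrix_inv r = rinv" unfolding rinv_def rr(1)
      by (rule matrix_inv_eqI) (rule tm_inv[OF rr(2)])+
    define u' where "u' = b + fapp \<alpha> b *s a"
    define c' where "c' = \<beta> - fapp \<beta> a *s \<alpha>"
    define s' where "s' = transv_mat u' c'"
    have conj: "r ** (s ** (rinv ** mat 1)) = s'"
      unfolding s'_def u'_def c'_def rinv_def rr(1) ss(1) by (rule tm_conj[OF rr(2)])
    have au': "fapp \<alpha> u' = fapp \<alpha> b" unfolding u'_def using rr(2) by simp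
    have "rinv *v u' = b" unfolding rinv_def tm_apply fapp_cneg au' unfolding u'_def
      by (simp add: vector_smult_lneg)
    hence u'0: "u' \<noteq> 0" using ss(3) by auto
    have cr: "fapp c' (r *v y) = fapp \<beta> y" for y
      unfolding c'_def rr(1) tm_apply using rr(2) by (simp add: algebra_simps)
    have c'0: "c' \<noteq> 0"
    proof
      assume "c' = 0"
      hence "fapp \<beta> y = 0" for y using cr[of y] by simp
      hence "\<beta> = 0" by (rule fapp_eq0)
      thus False using ss(4) by simp
    qed
    have cu': "fapp c' u' = 0" unfolding c'_def u'_def using rr(2) ss(2) by (simp add: algebra_simps)
    have td': "transv_data s' u' c'" unfolding transv_data_def s'_def using u'0 c'0 cu' by simp
    hence its': "is_transvection s'" unfolding is_transvection_def by blast
    have s'Y: "s' \<in> Ypow X 3" unfolding Ypow_def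
    proof (intro CollectI conjI exI[of _ "[r, s, rinv]"])
      show "is_transvection s'" by (rule its')
      show "length [r, s, rinv] \<le> 3" by simp
      show "set [r, s, rinv] \<subseteq> X \<union> matrix_inv ` X" using srt mi by auto
      show "s' = foldr (**) [r, s, rinv] (mat 1)" using conj by simp
    qed
    have tY: "t \<in> Ypow X 3" using XY srt(3) by blast
    have in1: "tweight [s',t] \<in> L" unfolding L_def by (rule tw2_in[OF s'Y tY])
    have tds': "transv_data s' (tv_u s') (tv_phi s')" by (rule tv_data[OF its'])
    have meq: "transv_mat (tv_u s') (tv_phi s') = transv_mat u' c'"
      using tds' unfolding transv_data_def s'_def by simp
    define e :: "('a^'n^'n) \<Rightarrow> ('a^'n^'n) \<Rightarrow> 'a" where "e p q = fapp (tv_phi q) (tv_u p)" for p q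
    have tws't: "tweight [s',t] = fapp (tv_phi t) u' * fapp c' (tv_u t)"
      unfolding tw2 by (rule tm_weight_eq[OF meq])
    also have "\<dots> = (e s t + e s r * e r t) * (e t s - e r s * e t r)"
      unfolding e_def u'_def c'_def a_def \<alpha>_def b_def \<beta>_def by (simp add: mult.commute)
    finally have E1: "tweight [s',t] = (e s t + e s r * e r t) * (e t s - e r s * e t r)" .
    have kap: "\<exists>\<kappa>. \<forall>x. fapp (tv_phi p) x = \<kappa> * B (tv_u p) x" if "p \<in> X" for p
      using sp_form[OF alt XF(1)[OF that] XF(3)[OF that]] .
    from kap[OF srt(1)] obtain ks where ks0: "\<forall>x. fapp (tv_phi s) x = ks * B (tv_u s) x" ..
    hence ks: "\<And>x. fapp (tv_phi s) x = ks * B (tv_u s) x" by (rule spec)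
    from kap[OF srt(2)] obtain kr where kr0: "\<forall>x. fapp (tv_phi r) x = kr * B (tv_u r) x" ..
    hence kr: "\<And>x. fapp (tv_phi r) x = kr * B (tv_u r) x" by (rule spec)
    from kap[OF srt(3)] obtain kt where kt0: "\<forall>x. fapp (tv_phi t) x = kt * B (tv_u t) x" ..
    hence kt: "\<And>x. fapp (tv_phi t) x = kt * B (tv_u t) x" by (rule spec)
    define P where "P = B (tv_u t) (tv_u s)"
    define Q where "Q = B (tv_u r) (tv_u s)"
    define R where "R = B (tv_u t) (tv_u r)"
    have sk: "B (tv_u s) (tv_u t) = - P" "B (tv_u s) (tv_u r) = - Q" "B (tv_u r) (tv_u t) = - R"
      unfolding P_def Q_def R_def by (rule alt_skew[OF alt])+
    have ev: "e s t = kt * P" "e t s = - (ks * P)" "e s r = kr * Q" "e r s = - (ks * Q)"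
      "e r t = kt * R" "e t r = - (kr * R)"
      unfolding e_def using ks kr kt sk P_def[symmetric] Q_def[symmetric] R_def[symmetric] by simp_all
    have W2: "tweight [s,t] = e s t * e t s" "tweight [s,r] = e s r * e r s" "tweight [r,t] = e r t * e t r"
      unfolding e_def tw2 by simp_all
    have W3: "w = e s r * e r t * e t s" unfolding wdef e_def tw3 by simp
    have key: "tweight [s',t] = tweight [s,t] + 2 * w - tweight [s,r] * tweight [r,t]"
      unfolding E1 W2 W3 ev by (rule poly_id)
    note LF = sf_facts[OF Lsf]
    have i2: "tweight [s,t] \<in> L" "tweight [s,r] \<in> L" "tweight [r,t] \<in> L"
      using tw2_in[of _ X] srt KL unfolding K_def by blast+
    have "2 * w = tweight [s',t] - tweight [s,t] + tweight [s,r] * tweight [r,t]"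
      using key by (simp add: algebra_simps)
    hence "2 * w \<in> L" using in1 i2 LF by simp
    moreover have "(2::'a) \<in> L" using LF(3)[OF LF(2) LF(2)] by simp
    ultimately have "inverse 2 * (2 * w) \<in> L" using LF(4,6) by blast
    moreover have "inverse 2 * (2 * w) = w" using char_not2[OF q_odd] by simp
    ultimately have wL: "w \<in> L" by simp
    have KneL: "K \<noteq> L" using wL w(2) by blast
    obtain f where cf: "card L = card K ^ f" using sf_power[OF Ksf Lsf KL] by blast
    have cU: "CARD('a) = card K ^ field_index K" by (rule field_index_eq[OF Ksf])
    have d2: "field_index K \<le> 2" using L2 unfolding K_def .
    have geK: "card K \<ge> 2" by (rule card_sf_ge2[OF Ksf])
    have geL: "card L \<ge> 2" by (rule card_sf_ge2[OF Lsf])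
    have LU: "card L \<le> CARD('a)" by (rule card_mono) auto
    have "f \<noteq> 0"
    proof
      assume "f = 0"
      hence "card L = 1" using cf by simp
      thus False using geL by simp
    qed
    moreover have "f \<noteq> 1"
    proof
      assume "f = 1"
      hence "card K = card L" using cf by simp
      hence "K = L" using KL by (metis card_subset_eq finite)
      thus False using KneL by simp
    qed
    moreover have "f \<le> field_index K"
      using LU cf cU geK by (metis power_le_imp_le_exp Suc_1 Suc_le_lessD)
    ultimately have "f = field_index K" using d2 by linarith
    hence "card L = CARD('a)" using cf cU by simp
    hence "L = UNIV" by (metis card_subset_eq finite subset_UNIV)
    thus ?thesis unfolding L_def .
  qed
qed

theorem lemma4p5:
  fixes B :: "'a::{field,finite}^'n \<Rightarrow> 'a^'n \<Rightarrow> 'a"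
    and \<sigma> :: "'a \<Rightarrow> 'a"
    and G X :: "('a^'n^'n) set"
  assumes q_odd: "odd CARD('a)"
    and dim: "CARD('n) \<ge> 4"
    and cases: "(alternating_form B \<and> G = Sp B) \<or> (hermitian_form \<sigma> B \<and> G = SU B)"
    and XT: "X \<subseteq> transvections_of G"
    and Xgen: "gen_group X = G"
    and uspan: "vec.span (tv_u ` X) = UNIV"
    and phispan: "vec.span (tv_phi ` X) = UNIV"
    and sconn: "strongly_connected X"
    and allw: "gen_subfield (all_cycle_weights X) = UNIV"
    and diam: "\<And>X''. X \<subseteq> X'' \<Longrightarrow> X'' \<subseteq> transvections_of G \<Longrightarrow>
                 diam_le X'' (dir_rel X'') 2 \<and> diam_le X'' (twoway_rel X'') 6"
    and L3: "Lk 3 X = UNIV"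
    and L2: "field_index (Lk 2 X) \<le> 2"
  shows "(alternating_form B \<and> G = Sp B \<longrightarrow> Lk 2 (Ypow X 3) = UNIV) \<and>
         (hermitian_form \<sigma> B \<and> G = SU B \<longrightarrow> Lk 2 X = {a. \<sigma> a = a})"
proof (intro conjI impI)
  assume h: "alternating_form B \<and> G = Sp B"
  show "Lk 2 (Ypow X 3) = UNIV"
    using sp_part[OF q_odd _ _ L3 L2, of B] h XT by blast
next
  assume h: "hermitian_form \<sigma> B \<and> G = SU B"
  show "Lk 2 X = {a. \<sigma> a = a}"
    using herm_part[OF q_odd _ _ L2, of \<sigma> B] h XT by blast
qed

end
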